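(* Let $n\ge4$. There is no total single-sorted alter ego $\underset{\sim}{\mathbf C}_n$ for $\mathbf C_n$ that yields a strong duality on $\mathcal G_n$.
   Context: $\mathbf C_n$ is the Heyting algebra on the chain $\{0<1<\dots<n-1\}$, with min, max, $\bot=0$, $\top=n-1$, $a\to b=\top$ if $a\le b$, $a\to b=b$ if $b<a$. $\mathcal G_n$ is the class of algebras isomorphic to subalgebras of direct powers of $\mathbf C_n$ (the variety generated by $\mathbf C_n$). A (single-sorted) alter ego of $\mathbf C_n$ is a structure $\underset{\sim}{\mathbf C}_n=(C_n;G,H,R,\mathscr T)$ where $\mathscr T$ is the discrete topology, $G$ is a set of finitary total operations, $H$ a set of finitary partial operations and $R$ a set of finitary relations on $C_n$, each algebraic (the graph, resp. the relation, is a subalgebra of a finite power of $\mathbf C_n$); it is total if $H=\emptyset$. With $\mathcal X=\mathbb{IS}_c\mathbb P^+(\underset{\sim}{\mathbf C}_n)$ the class of structures isomorphic to closed substructures of (possibly empty) powers, and hom-functors $D=\mathcal G_n(-,\mathbf C_n)$, $E=\mathcal X(-,\underset{\sim}{\mathbf C}_n)$, the alter ego yields a duality if each evaluation $e_{\mathbf A}\colon\mathbf A\to ED(\mathbf A)$ is an isomorphism, a full duality if moreover each evaluation $\varepsilon_{\mathbf X}\colon\mathbf X\to DE(\mathbf X)$ is an isomorphism, and a strong duality if it yields a full duality and $\underset{\sim}{\mathbf C}_n$ is injective in $\mathcal X$ (with respect to embeddings). *)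

theory Defs
  imports "HOL-Analysis.Analysis"
begin

section \<open>The Heyting chain C_n, carried by {0,...,n-1} :: nat set\<close>

definition himp :: "nat \<Rightarrow> nat \<Rightarrow> nat \<Rightarrow> nat" where
  "himp n a b = (if a \<le> b then n - 1 else b)"

section \<open>Algebras in G_n: subalgebras of direct powers C_n^S (S possibly empty)\<close>

text \<open>Points of C_n^S are the extensional functions in PiE S (\<lambda>_. {..<n});
  all operations are pointwise.\<close>

definition subalg :: "nat \<Rightarrow> 'a set \<Rightarrow> ('a \<Rightarrow> nat) set \<Rightarrow> bool" where
  "subalg n S A \<longleftrightarrow> A \<subseteq> PiE S (\<lambda>_. {..<n}) \<and>
     (\<lambda>s\<in>S. 0) \<in> A \<and> (\<lambda>s\<in>S. n - 1) \<in> A \<and>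
     (\<forall>x\<in>A. \<forall>y\<in>A. (\<lambda>s\<in>S. min (x s) (y s)) \<in> A \<and> (\<lambda>s\<in>S. max (x s) (y s)) \<in> A
                   \<and> (\<lambda>s\<in>S. himp n (x s) (y s)) \<in> A)"

definition alg_hom :: "nat \<Rightarrow> 'a set \<Rightarrow> ('a \<Rightarrow> nat) set \<Rightarrow> 'b set \<Rightarrow> ('b \<Rightarrow> nat) set
                        \<Rightarrow> (('a \<Rightarrow> nat) \<Rightarrow> ('b \<Rightarrow> nat)) \<Rightarrow> bool" where
  "alg_hom n S A T B h \<longleftrightarrow> h \<in> A \<rightarrow> B \<and>
     h (\<lambda>s\<in>S. 0) = (\<lambda>t\<in>T. 0) \<and> h (\<lambda>s\<in>S. n - 1) = (\<lambda>t\<in>T. n - 1) \<and>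
     (\<forall>x\<in>A. \<forall>y\<in>A.
        h (\<lambda>s\<in>S. min (x s) (y s)) = (\<lambda>t\<in>T. min (h x t) (h y t)) \<and>
        h (\<lambda>s\<in>S. max (x s) (y s)) = (\<lambda>t\<in>T. max (h x t) (h y t)) \<and>
        h (\<lambda>s\<in>S. himp n (x s) (y s)) = (\<lambda>t\<in>T. himp n (h x t) (h y t)))"

definition alg_iso :: "nat \<Rightarrow> 'a set \<Rightarrow> ('a \<Rightarrow> nat) set \<Rightarrow> 'b set \<Rightarrow> ('b \<Rightarrow> nat) set
                        \<Rightarrow> (('a \<Rightarrow> nat) \<Rightarrow> ('b \<Rightarrow> nat)) \<Rightarrow> bool" where
  "alg_iso n S A T B h \<longleftrightarrow> alg_hom n S A T B h \<and> bij_betw h A B"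

definition hom_to_C :: "nat \<Rightarrow> 'a set \<Rightarrow> ('a \<Rightarrow> nat) set \<Rightarrow> (('a \<Rightarrow> nat) \<Rightarrow> nat) \<Rightarrow> bool" where
  "hom_to_C n S A h \<longleftrightarrow> h \<in> A \<rightarrow> {..<n} \<and>
     h (\<lambda>s\<in>S. 0) = 0 \<and> h (\<lambda>s\<in>S. n - 1) = n - 1 \<and>
     (\<forall>x\<in>A. \<forall>y\<in>A.
        h (\<lambda>s\<in>S. min (x s) (y s)) = min (h x) (h y) \<and>
        h (\<lambda>s\<in>S. max (x s) (y s)) = max (h x) (h y) \<and>
        h (\<lambda>s\<in>S. himp n (x s) (y s)) = himp n (h x) (h y))"

text \<open>D(A) = G_n(A, C_n), as a subset of C_n^A.\<close>
definition Dfun :: "nat \<Rightarrow> 'a set \<Rightarrow> ('a \<Rightarrow> nat) set \<Rightarrow> (('a \<Rightarrow> nat) \<Rightarrow> nat) set" where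
  "Dfun n S A = {h \<in> PiE A (\<lambda>_. {..<n}). hom_to_C n S A h}"

section \<open>Single-sorted total alter egos (G, R) of C_n with discrete topology\<close>

text \<open>An operation of arity k is a pair (k, g), g applied to lists of length k;
  a relation of arity k is a pair (k, r), r a set of lists of length k.\<close>

definition tuples :: "nat \<Rightarrow> nat \<Rightarrow> nat list set" where
  "tuples n k = {xs. length xs = k \<and> set xs \<subseteq> {..<n}}"

definition alg_rel :: "nat \<Rightarrow> nat \<Rightarrow> nat list set \<Rightarrow> bool" where
  "alg_rel n k r \<longleftrightarrow> r \<subseteq> tuples n k \<and>
     replicate k 0 \<in> r \<and> replicate k (n - 1) \<in> r \<and>
     (\<forall>xs\<in>r. \<forall>ys\<in>r. map2 min xs ys \<in> r \<and> map2 max xs ys \<in> r \<and> map2 (himp n) xs ys \<in> r)"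

definition graph_op :: "nat \<Rightarrow> nat \<Rightarrow> (nat list \<Rightarrow> nat) \<Rightarrow> nat list set" where
  "graph_op n k g = {xs @ [g xs] | xs. xs \<in> tuples n k}"

definition alter_ego :: "nat \<Rightarrow> (nat \<times> (nat list \<Rightarrow> nat)) set \<Rightarrow> (nat \<times> nat list set) set \<Rightarrow> bool" where
  "alter_ego n G R \<longleftrightarrow>
     (\<forall>(k, g)\<in>G. (\<forall>xs\<in>tuples n k. g xs < n) \<and> alg_rel n (Suc k) (graph_op n k g)) \<and>
     (\<forall>(k, r)\<in>R. alg_rel n k r)"

section \<open>The class X = IS_c P^+ of the alter ego: closed substructures of powers\<close>

definition powtop :: "nat \<Rightarrow> 'a set \<Rightarrow> ('a \<Rightarrow> nat) topology" where
  "powtop n S = product_topology (\<lambda>_. discrete_topology {..<n}) S"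

definition papp :: "'a set \<Rightarrow> (nat list \<Rightarrow> nat) \<Rightarrow> ('a \<Rightarrow> nat) list \<Rightarrow> ('a \<Rightarrow> nat)" where
  "papp S g xs = (\<lambda>s\<in>S. g (map (\<lambda>x. x s) xs))"

definition rel_holds :: "'a set \<Rightarrow> nat list set \<Rightarrow> ('a \<Rightarrow> nat) list \<Rightarrow> bool" where
  "rel_holds S r xs \<longleftrightarrow> (\<forall>s\<in>S. map (\<lambda>x. x s) xs \<in> r)"

definition in_X :: "nat \<Rightarrow> (nat \<times> (nat list \<Rightarrow> nat)) set \<Rightarrow> 'a set \<Rightarrow> ('a \<Rightarrow> nat) set \<Rightarrow> bool" where
  "in_X n G S X \<longleftrightarrow> X \<subseteq> PiE S (\<lambda>_. {..<n}) \<and>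
     closedin (powtop n S) X \<and>
     (\<forall>(k, g)\<in>G. \<forall>xs. length xs = k \<and> set xs \<subseteq> X \<longrightarrow> papp S g xs \<in> X)"

definition str_mor :: "nat \<Rightarrow> (nat \<times> (nat list \<Rightarrow> nat)) set \<Rightarrow> (nat \<times> nat list set) set
     \<Rightarrow> 'a set \<Rightarrow> ('a \<Rightarrow> nat) set \<Rightarrow> 'b set \<Rightarrow> ('b \<Rightarrow> nat) set \<Rightarrow> (('a \<Rightarrow> nat) \<Rightarrow> ('b \<Rightarrow> nat)) \<Rightarrow> bool" where
  "str_mor n G R S X T Y \<phi> \<longleftrightarrow> \<phi> \<in> X \<rightarrow> Y \<and>
     continuous_map (subtopology (powtop n S) X) (subtopology (powtop n T) Y) \<phi> \<and>
     (\<forall>(k, g)\<in>G. \<forall>xs. length xs = k \<and> set xs \<subseteq> X \<longrightarrow> \<phi> (papp S g xs) = papp T g (map \<phi> xs)) \<and>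
     (\<forall>(k, r)\<in>R. \<forall>xs. length xs = k \<and> set xs \<subseteq> X \<and> rel_holds S r xs \<longrightarrow> rel_holds T r (map \<phi> xs))"

definition str_iso :: "nat \<Rightarrow> (nat \<times> (nat list \<Rightarrow> nat)) set \<Rightarrow> (nat \<times> nat list set) set
     \<Rightarrow> 'a set \<Rightarrow> ('a \<Rightarrow> nat) set \<Rightarrow> 'b set \<Rightarrow> ('b \<Rightarrow> nat) set \<Rightarrow> (('a \<Rightarrow> nat) \<Rightarrow> ('b \<Rightarrow> nat)) \<Rightarrow> bool" where
  "str_iso n G R S X T Y \<phi> \<longleftrightarrow> bij_betw \<phi> X Y \<and> str_mor n G R S X T Y \<phi> \<and>
     str_mor n G R T Y S X (inv_into X \<phi>)"

definition str_emb :: "nat \<Rightarrow> (nat \<times> (nat list \<Rightarrow> nat)) set \<Rightarrow> (nat \<times> nat list set) set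
     \<Rightarrow> 'a set \<Rightarrow> ('a \<Rightarrow> nat) set \<Rightarrow> 'b set \<Rightarrow> ('b \<Rightarrow> nat) set \<Rightarrow> (('a \<Rightarrow> nat) \<Rightarrow> ('b \<Rightarrow> nat)) \<Rightarrow> bool" where
  "str_emb n G R S X T Y \<phi> \<longleftrightarrow> str_mor n G R S X T Y \<phi> \<and> \<phi> ` X \<subseteq> Y \<and>
     in_X n G T (\<phi> ` X) \<and> str_iso n G R S X T (\<phi> ` X) \<phi>"

definition mor_to_C :: "nat \<Rightarrow> (nat \<times> (nat list \<Rightarrow> nat)) set \<Rightarrow> (nat \<times> nat list set) set
     \<Rightarrow> 'a set \<Rightarrow> ('a \<Rightarrow> nat) set \<Rightarrow> (('a \<Rightarrow> nat) \<Rightarrow> nat) \<Rightarrow> bool" where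
  "mor_to_C n G R S X \<alpha> \<longleftrightarrow> \<alpha> \<in> X \<rightarrow> {..<n} \<and>
     continuous_map (subtopology (powtop n S) X) (discrete_topology {..<n}) \<alpha> \<and>
     (\<forall>(k, g)\<in>G. \<forall>xs. length xs = k \<and> set xs \<subseteq> X \<longrightarrow> \<alpha> (papp S g xs) = g (map \<alpha> xs)) \<and>
     (\<forall>(k, r)\<in>R. \<forall>xs. length xs = k \<and> set xs \<subseteq> X \<and> rel_holds S r xs \<longrightarrow> map \<alpha> xs \<in> r)"

text \<open>E(X) = X(X, alter ego), as a subset of C_n^X.\<close>
definition Efun :: "nat \<Rightarrow> (nat \<times> (nat list \<Rightarrow> nat)) set \<Rightarrow> (nat \<times> nat list set) set
     \<Rightarrow> 'a set \<Rightarrow> ('a \<Rightarrow> nat) set \<Rightarrow> (('a \<Rightarrow> nat) \<Rightarrow> nat) set" where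
  "Efun n G R S X = {\<alpha> \<in> PiE X (\<lambda>_. {..<n}). mor_to_C n G R S X \<alpha>}"

definition evalA :: "nat \<Rightarrow> 'a set \<Rightarrow> ('a \<Rightarrow> nat) set \<Rightarrow> ('a \<Rightarrow> nat) \<Rightarrow> ((('a \<Rightarrow> nat) \<Rightarrow> nat) \<Rightarrow> nat)" where
  "evalA n S A a = (\<lambda>h\<in>Dfun n S A. h a)"

definition evalX :: "nat \<Rightarrow> (nat \<times> (nat list \<Rightarrow> nat)) set \<Rightarrow> (nat \<times> nat list set) set
     \<Rightarrow> 'a set \<Rightarrow> ('a \<Rightarrow> nat) set \<Rightarrow> ('a \<Rightarrow> nat) \<Rightarrow> ((('a \<Rightarrow> nat) \<Rightarrow> nat) \<Rightarrow> nat)" where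
  "evalX n G R S X x = (\<lambda>\<alpha>\<in>Efun n G R S X. \<alpha> x)"

text \<open>Strong duality, with all algebras and structures taken (up to isomorphism) as
  subobjects of powers indexed by subsets of the type 'i.\<close>
definition strong_duality :: "'i itself \<Rightarrow> nat \<Rightarrow> (nat \<times> (nat list \<Rightarrow> nat)) set
     \<Rightarrow> (nat \<times> nat list set) set \<Rightarrow> bool" where
  "strong_duality _ n G R \<longleftrightarrow>
     \<comment> \<open>duality: each e_A is an isomorphism A \<rightarrow> ED(A)\<close>
     (\<forall>(S::'i set) A. subalg n S A \<longrightarrow>
        alg_iso n S A (Dfun n S A) (Efun n G R A (Dfun n S A)) (evalA n S A)) \<and>
     \<comment> \<open>full: each epsilon_X is an isomorphism X \<rightarrow> DE(X)\<close>
     (\<forall>(S::'i set) X. in_X n G S X \<longrightarrow>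
        str_iso n G R S X (Efun n G R S X) (Dfun n X (Efun n G R S X)) (evalX n G R S X)) \<and>
     \<comment> \<open>strong: the alter ego is injective in X with respect to embeddings\<close>
     (\<forall>(S::'i set) X (T::'i set) Y \<phi>. in_X n G S X \<and> in_X n G T Y \<and> str_emb n G R S X T Y \<phi> \<longrightarrow>
        (\<forall>\<alpha>\<in>Efun n G R S X. \<exists>\<beta>\<in>Efun n G R T Y. \<forall>x\<in>X. \<beta> (\<phi> x) = \<alpha> x))"

end

theory Submission
  imports Defs
begin

lemma rep_snoc: "replicate (Suc k) a = replicate k a @ [a]"
  by (simp add: replicate_append_same)

lemma map2_append1:
  "length xs = length ys \<Longrightarrow> map2 f (xs @ [a]) (ys @ [b]) = map2 f xs ys @ [f a b]"
  by simp

lemma graph_mem: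
  assumes "zs @ [v] \<in> graph_op n k g" "length zs = k"
  shows "g zs = v"
  using assms unfolding graph_op_def tuples_def by auto

lemma himp_lt: "0 < n \<Longrightarrow> b < n \<Longrightarrow> himp n a b < n"
  by (simp add: himp_def)

lemma op_props:
  assumes ae: "alter_ego n G R" and kg: "(k, g) \<in> G"
  shows "\<And>xs. xs \<in> tuples n k \<Longrightarrow> g xs < n"
    and "g (replicate k 0) = 0"
    and "g (replicate k (n - 1)) = n - 1"
    and "\<And>xs ys. xs \<in> tuples n k \<Longrightarrow> ys \<in> tuples n k \<Longrightarrow> g (map2 min xs ys) = min (g xs) (g ys)"
    and "\<And>xs ys. xs \<in> tuples n k \<Longrightarrow> ys \<in> tuples n k \<Longrightarrow> g (map2 max xs ys) = max (g xs) (g ys)"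
    and "\<And>xs ys. xs \<in> tuples n k \<Longrightarrow> ys \<in> tuples n k \<Longrightarrow> g (map2 (himp n) xs ys) = himp n (g xs) (g ys)"
proof -
  have lt: "\<forall>xs\<in>tuples n k. g xs < n" and ar: "alg_rel n (Suc k) (graph_op n k g)"
    using ae kg unfolding alter_ego_def by auto
  show "\<And>xs. xs \<in> tuples n k \<Longrightarrow> g xs < n" using lt by auto
  have "replicate (Suc k) 0 \<in> graph_op n k g"
    using ar unfolding alg_rel_def by blast
  then have "replicate k 0 @ [0] \<in> graph_op n k g" unfolding rep_snoc .
  then show "g (replicate k 0) = 0" by (rule graph_mem) simp
  have "replicate (Suc k) (n-1) \<in> graph_op n k g"
    using ar unfolding alg_rel_def by blast
  then have "replicate k (n-1) @ [n-1] \<in> graph_op n k g" unfolding rep_snoc .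
  then show "g (replicate k (n-1)) = n-1" by (rule graph_mem) simp
  {
    fix xs ys assume xs: "xs \<in> tuples n k" and ys: "ys \<in> tuples n k"
    have gx: "xs @ [g xs] \<in> graph_op n k g" "ys @ [g ys] \<in> graph_op n k g"
      using xs ys unfolding graph_op_def by auto
    have len: "length xs = k" "length ys = k" using xs ys by (auto simp: tuples_def)
    have len12: "length xs = length ys" using len by simp
    have cl: "\<forall>xs\<in>graph_op n k g. \<forall>ys\<in>graph_op n k g. map2 min xs ys \<in> graph_op n k g \<and>
        map2 max xs ys \<in> graph_op n k g \<and> map2 (himp n) xs ys \<in> graph_op n k g"
      using ar unfolding alg_rel_def by (elim conjE)
    note c = bspec[OF bspec[OF cl gx(1)] gx(2)]
    note c1 = conjunct1[OF c] and c2 = conjunct1[OF conjunct2[OF c]] and c3 = conjunct2[OF conjunct2[OF c]]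
    show "g (map2 min xs ys) = min (g xs) (g ys)"
    proof (rule graph_mem)
      show "map2 min xs ys @ [min (g xs) (g ys)] \<in> graph_op n k g"
        using c1 unfolding map2_append1[OF len12] .
      show "length (map2 min xs ys) = k" using len by simp
    qed
    show "g (map2 max xs ys) = max (g xs) (g ys)"
    proof (rule graph_mem)
      show "map2 max xs ys @ [max (g xs) (g ys)] \<in> graph_op n k g"
        using c2 unfolding map2_append1[OF len12] .
      show "length (map2 max xs ys) = k" using len by simp
    qed
    show "g (map2 (himp n) xs ys) = himp n (g xs) (g ys)"
    proof (rule graph_mem)
      show "map2 (himp n) xs ys @ [himp n (g xs) (g ys)] \<in> graph_op n k g"
        using c3 unfolding map2_append1[OF len12] .
      show "length (map2 (himp n) xs ys) = k" using len by simp
    qed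
  }
qed

lemma map2_rep: "length cs = k \<Longrightarrow> map2 f cs (replicate k a) = map (\<lambda>c. f c a) cs"
  by (induction cs arbitrary: k) auto

lemma map_const_eq: "(\<forall>c\<in>set cs. f c = a) \<Longrightarrow> length cs = k \<Longrightarrow> map f cs = replicate k a"
  by (induction cs arbitrary: k) auto

lemma rep_tuples: "a < n \<Longrightarrow> replicate k a \<in> tuples n k"
  by (auto simp: tuples_def)

lemma key1:
  assumes ae: "alter_ego n G R" and kg: "(k, g) \<in> G" and n: "2 \<le> n"
    and cs: "cs \<in> tuples n k" and ge: "\<forall>c\<in>set cs. 1 \<le> c"
  shows "1 \<le> g cs"
proof -
  have len: "length cs = k" using cs by (simp add: tuples_def)
  have z: "replicate k 0 \<in> tuples n k" using n by (intro rep_tuples) simp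
  have E0: "map2 (himp n) cs (replicate k 0) = replicate k 0"
    using len ge by (simp add: map2_rep, intro map_const_eq) (auto simp: himp_def)
  have E: "g (replicate k 0) = himp n (g cs) (g (replicate k 0))"
    using op_props(6)[OF ae kg cs z] unfolding E0 .
  have H: "himp n (g cs) 0 = 0" using E[unfolded op_props(2)[OF ae kg]] by (rule sym)
  show ?thesis
  proof (rule ccontr)
    assume "\<not> 1 \<le> g cs"
    then have "g cs = 0" by simp
    then have "himp n (g cs) 0 = n - 1" by (simp add: himp_def)
    with H n show False by simp
  qed
qed

lemma key2:
  assumes ae: "alter_ego n G R" and kg: "(k, g) \<in> G" and n: "4 \<le> n"
    and cs: "cs \<in> tuples n k" and ge: "\<forall>c\<in>set cs. 2 \<le> c"
  shows "2 \<le> g cs"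
proof -
  have len: "length cs = k" using cs by (simp add: tuples_def)
  have o: "replicate k 1 \<in> tuples n k" using n by (intro rep_tuples) simp
  have g1: "1 \<le> g (replicate k 1)" using key1[OF ae kg _ o] n by simp
  have E1: "map2 min cs (replicate k 1) = replicate k 1"
    using len ge by (simp add: map2_rep, intro map_const_eq) auto
  have m: "g (replicate k 1) = min (g cs) (g (replicate k 1))"
    using op_props(4)[OF ae kg cs o] unfolding E1 .
  have E2: "map2 (himp n) cs (replicate k 1) = replicate k 1"
    using len ge by (simp add: map2_rep, intro map_const_eq) (auto simp: himp_def)
  have h: "g (replicate k 1) = himp n (g cs) (g (replicate k 1))"
    using op_props(6)[OF ae kg cs o] unfolding E2 .
  have le: "g (replicate k 1) \<le> g cs"
    using m min.cobounded1[of "g cs" "g (replicate k 1)"] by linarith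
  show ?thesis
  proof (cases "g cs \<le> g (replicate k 1)")
    case True
    then have "himp n (g cs) (g (replicate k 1)) = n - 1" by (simp add: himp_def)
    then have "g (replicate k 1) = n - 1" using h by linarith
    then show ?thesis using le n by linarith
  next
    case False
    then show ?thesis using g1 by linarith
  qed
qed

definition pt :: "'i \<Rightarrow> nat \<Rightarrow> 'i \<Rightarrow> nat" where
  "pt t c = (\<lambda>s\<in>{t}. c)"

lemma restr1: "(\<lambda>s\<in>{t}. F s) = pt t (F t)"
  unfolding pt_def by (rule restrict_ext) simp

lemma pt_at [simp]: "pt t c t = c"
  by (simp add: pt_def )

lemma pt_inj [simp]: "pt t a = pt t b \<longleftrightarrow> a = b"
proof
  assume "pt t a = pt t b"
  then have "pt t a t = pt t b t" by simp
  then show "a = b" by simp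
qed simp

lemma pt_PiE [simp]: "pt t c \<in> PiE {t} (\<lambda>_. {..<n}) \<longleftrightarrow> c < n"
  by (auto simp: pt_def)

lemma papp_pt: "papp {t} g xs = pt t (g (map (\<lambda>x. x t) xs))"
  unfolding papp_def by (rule restr1)

lemma powtop_haus: "Hausdorff_space (powtop n S)"
  by (simp add: powtop_def Hausdorff_space_product_topology)

lemma topspace_powtop [simp]: "topspace (powtop n S) = PiE S (\<lambda>_. {..<n})"
  by (simp add: powtop_def)

lemma fin_disc:
  assumes "X \<subseteq> PiE S (\<lambda>_. {..<n})" "finite X"
  shows "subtopology (powtop n S) X = discrete_topology X"
  using assms by (intro subtopology_eq_discrete_topology_finite Hausdorff_imp_t1_space powtop_haus) auto

lemma fin_closed:
  assumes "X \<subseteq> PiE S (\<lambda>_. {..<n})" "finite X"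
  shows "closedin (powtop n S) X"
  using assms by (intro closedin_Hausdorff_finite powtop_haus) auto

lemma map_pt_t:
  assumes "set xs \<subseteq> pt t ` U"
  shows "set (map (\<lambda>x. x t) xs) \<subseteq> U"
  using assms by auto


lemma inX_pt:
  assumes ae: "alter_ego n G R" and n: "2 \<le> n"
    and cl: "\<And>k g cs. (k, g) \<in> G \<Longrightarrow> cs \<in> tuples n k \<Longrightarrow> \<forall>c\<in>set cs. m \<le> c \<Longrightarrow> m \<le> g cs"
  shows "in_X n G {t} (pt t ` {m..<n})"
proof -
  have sub: "pt t ` {m..<n} \<subseteq> PiE {t} (\<lambda>_. {..<n})"
    by (rule image_subsetI) simp
  have fin: "finite (pt t ` {m..<n})" by simp
  have clo: "closedin (powtop n {t}) (pt t ` {m..<n})" by (rule fin_closed[OF sub fin])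
  have G': "papp {t} g xs \<in> pt t ` {m..<n}"
    if kg: "(k, g) \<in> G" and len: "length xs = k" and xs: "set xs \<subseteq> pt t ` {m..<n}" for k g xs
  proof -
    let ?cs = "map (\<lambda>x. x t) xs"
    have cs: "?cs \<in> tuples n k" using len map_pt_t[OF xs] unfolding tuples_def by auto
    have "\<forall>c\<in>set ?cs. m \<le> c" using map_pt_t[OF xs] by auto
    then have "m \<le> g ?cs" by (rule cl[OF kg cs])
    moreover have "g ?cs < n" using op_props(1)[OF ae kg cs] .
    ultimately have "g ?cs \<in> {m..<n}" by simp
    then show "papp {t} g xs \<in> pt t ` {m..<n}" unfolding papp_pt by (rule imageI)
  qed
  have G: "\<forall>(k, g)\<in>G. \<forall>xs. length xs = k \<and> set xs \<subseteq> pt t ` {m..<n} \<longrightarrow> papp {t} g xs \<in> pt t ` {m..<n}"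
    unfolding split_def
  proof (intro ballI allI impI)
    fix p xs assume "p \<in> G" and h: "length xs = fst p \<and> set xs \<subseteq> pt t ` {m..<n}"
    then show "papp {t} (snd p) xs \<in> pt t ` {m..<n}" using G'[of "fst p" "snd p" xs] by simp
  qed
  show ?thesis unfolding in_X_def by (intro conjI sub clo G)
qed

lemma emb_id:
  assumes X: "in_X n G S X" and Y: "in_X n G S Y" and XY: "X \<subseteq> Y" and fin: "finite Y"
  shows "str_emb n G R S X S Y id"
proof -
  have Xs: "X \<subseteq> PiE S (\<lambda>_. {..<n})" using X unfolding in_X_def by (elim conjE)
  have Ys: "Y \<subseteq> PiE S (\<lambda>_. {..<n})" using Y unfolding in_X_def by (elim conjE)
  have finX: "finite X" using fin XY by (rule finite_subset[rotated])
  have dX: "subtopology (powtop n S) X = discrete_topology X" using fin_disc[OF Xs finX] .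
  have dY: "subtopology (powtop n S) Y = discrete_topology Y" using fin_disc[OF Ys fin] .
  have clX0: "\<forall>(k, g)\<in>G. \<forall>xs. length xs = k \<and> set xs \<subseteq> X \<longrightarrow> papp S g xs \<in> X"
    using X unfolding in_X_def by (elim conjE)
  have clX: "papp S g xs \<in> X" if "(k, g) \<in> G" "length xs = k" "set xs \<subseteq> X" for k g xs
    using bspec[OF clX0 that(1)] that(2,3) by simp
  have m1: "str_mor n G R S X S Y id"
    unfolding str_mor_def
  proof (intro conjI)
    show "id \<in> X \<rightarrow> Y" using XY by auto
    show "continuous_map (subtopology (powtop n S) X) (subtopology (powtop n S) Y) id"
      unfolding dX dY continuous_map_from_discrete_topology topspace_discrete_topology using XY by auto
  qed simp_all
  have m2: "str_mor n G R S X S X id"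
    unfolding str_mor_def
  proof (intro conjI)
    show "id \<in> X \<rightarrow> X" by auto
    show "continuous_map (subtopology (powtop n S) X) (subtopology (powtop n S) X) id"
      unfolding dX continuous_map_from_discrete_topology topspace_discrete_topology by auto
  qed simp_all
  have inv: "\<And>x. x \<in> X \<Longrightarrow> inv_into X id x = x"
    by (simp add: inv_into_f_f)
  have mapinv: "\<And>xs. set xs \<subseteq> X \<Longrightarrow> map (inv_into X id) xs = xs"
    using inv by (simp add: map_idI subset_iff)
  have m3: "str_mor n G R S X S X (inv_into X id)"
    unfolding str_mor_def
  proof (intro conjI)
    show "inv_into X id \<in> X \<rightarrow> X" using inv by auto
    show "continuous_map (subtopology (powtop n S) X) (subtopology (powtop n S) X) (inv_into X id)"
      unfolding dX continuous_map_from_discrete_topology topspace_discrete_topology using inv by auto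
    have H: "inv_into X id (papp S g xs) = papp S g (map (inv_into X id) xs)"
      if "(k, g) \<in> G" "length xs = k" "set xs \<subseteq> X" for k g xs
      using inv[OF clX[OF that]] mapinv[OF that(3)] by simp
    show "\<forall>(k, g)\<in>G. \<forall>xs. length xs = k \<and> set xs \<subseteq> X \<longrightarrow>
        inv_into X id (papp S g xs) = papp S g (map (inv_into X id) xs)"
      unfolding split_def
    proof (intro ballI allI impI)
      fix p xs assume "p \<in> G" "length xs = fst p \<and> set xs \<subseteq> X"
      then show "inv_into X id (papp S (snd p) xs) = papp S (snd p) (map (inv_into X id) xs)"
        using H[of "fst p" "snd p" xs] by simp
    qed
    show "\<forall>(k, r)\<in>R. \<forall>xs. length xs = k \<and> set xs \<subseteq> X \<and> rel_holds S r xs \<longrightarrow>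
        rel_holds S r (map (inv_into X id) xs)"
      unfolding split_def using mapinv by simp
  qed
  have idX: "id ` X = X" by simp
  show ?thesis
    unfolding str_emb_def str_iso_def idX by (intro conjI m1 m2 m3 XY X bij_betw_id)
qed

definition fc :: "nat \<Rightarrow> nat \<Rightarrow> nat \<Rightarrow> nat" where
  "fc n c v = (if v = 0 then 0 else if v = 2 then c else n - 1)"

lemma fc_hom:
  assumes n: "4 \<le> n" and c: "1 \<le> c" "c < n" and v: "v \<in> {0, 2, n - 1}" and w: "w \<in> {0, 2, n - 1}"
  shows "min v w \<in> {0, 2, n - 1}" "max v w \<in> {0, 2, n - 1}" "himp n v w \<in> {0, 2, n - 1}"
    "fc n c (min v w) = min (fc n c v) (fc n c w)"
    "fc n c (max v w) = max (fc n c v) (fc n c w)"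
    "fc n c (himp n v w) = himp n (fc n c v) (fc n c w)"
  using assms by (auto simp: fc_def himp_def)

lemma fc_lt: "c < n \<Longrightarrow> fc n c v < n"
  by (simp add: fc_def)

lemma map_pair: "map (\<lambda>h. f (a h) (b h)) hs = map2 f (map a hs) (map b hs)"
  by (induction hs) auto

lemma dfun_closed:
  assumes ae: "alter_ego n G R" and kg: "(k, g) \<in> G" and A: "subalg n S A"
    and len: "length hs = k" and hs: "set hs \<subseteq> Dfun n S A"
  shows "papp A g hs \<in> Dfun n S A"
proof -
  have homs: "hom_to_C n S A h" if "h \<in> set hs" for h using hs that by (auto simp: Dfun_def)
  have hpi: "h \<in> A \<rightarrow> {..<n}" if "h \<in> set hs" for h using homs[OF that] by (simp add: hom_to_C_def)
  have tup: "map (\<lambda>h. h a) hs \<in> tuples n k" if "a \<in> A" for a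
    using len hpi that unfolding tuples_def by auto
  have Pa: "papp A g hs a = g (map (\<lambda>h. h a) hs)" if "a \<in> A" for a
    using that by (simp add: papp_def)
  have c0: "(\<lambda>s\<in>S. 0) \<in> A" using A unfolding subalg_def by (elim conjE)
  have ct: "(\<lambda>s\<in>S. n - 1) \<in> A" using A unfolding subalg_def by (elim conjE)
  have cl: "\<forall>x\<in>A. \<forall>y\<in>A. (\<lambda>s\<in>S. min (x s) (y s)) \<in> A \<and> (\<lambda>s\<in>S. max (x s) (y s)) \<in> A
                   \<and> (\<lambda>s\<in>S. himp n (x s) (y s)) \<in> A"
    using A unfolding subalg_def by (elim conjE)
  have h0: "h (\<lambda>s\<in>S. 0) = 0" if "h \<in> set hs" for h
    using homs[OF that] unfolding hom_to_C_def by (elim conjE)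
  have ht: "h (\<lambda>s\<in>S. n - 1) = n - 1" if "h \<in> set hs" for h
    using homs[OF that] unfolding hom_to_C_def by (elim conjE)
  have hop: "\<forall>x\<in>A. \<forall>y\<in>A.
        h (\<lambda>s\<in>S. min (x s) (y s)) = min (h x) (h y) \<and>
        h (\<lambda>s\<in>S. max (x s) (y s)) = max (h x) (h y) \<and>
        h (\<lambda>s\<in>S. himp n (x s) (y s)) = himp n (h x) (h y)" if "h \<in> set hs" for h
    using homs[OF that] unfolding hom_to_C_def by (elim conjE)
  have inPi: "papp A g hs \<in> PiE A (\<lambda>_. {..<n})"
    unfolding papp_def using op_props(1)[OF ae kg tup] by auto
  have P0: "papp A g hs (\<lambda>s\<in>S. 0) = 0"
  proof -
    have "map (\<lambda>h. h (\<lambda>s\<in>S. 0)) hs = replicate k 0"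
      using len h0 by (intro map_const_eq) auto
    then show ?thesis using Pa[OF c0] op_props(2)[OF ae kg] by simp
  qed
  have Pt: "papp A g hs (\<lambda>s\<in>S. n - 1) = n - 1"
  proof -
    have "map (\<lambda>h. h (\<lambda>s\<in>S. n - 1)) hs = replicate k (n - 1)"
      using len ht by (intro map_const_eq) auto
    then show ?thesis using Pa[OF ct] op_props(3)[OF ae kg] by simp
  qed
  have Pop: "papp A g hs (\<lambda>s\<in>S. min (x s) (y s)) = min (papp A g hs x) (papp A g hs y) \<and>
        papp A g hs (\<lambda>s\<in>S. max (x s) (y s)) = max (papp A g hs x) (papp A g hs y) \<and>
        papp A g hs (\<lambda>s\<in>S. himp n (x s) (y s)) = himp n (papp A g hs x) (papp A g hs y)"
    if x: "x \<in> A" and y: "y \<in> A" for x y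
  proof -
    note cxy = bspec[OF bspec[OF cl x] y]
    have e1: "map (\<lambda>h. h (\<lambda>s\<in>S. min (x s) (y s))) hs = map (\<lambda>h. min (h x) (h y)) hs"
      using hop x y by (intro map_cong) auto
    have e2: "map (\<lambda>h. h (\<lambda>s\<in>S. max (x s) (y s))) hs = map (\<lambda>h. max (h x) (h y)) hs"
      using hop x y by (intro map_cong) auto
    have e3: "map (\<lambda>h. h (\<lambda>s\<in>S. himp n (x s) (y s))) hs = map (\<lambda>h. himp n (h x) (h y)) hs"
      using hop x y by (intro map_cong) auto
    have r1: "papp A g hs (\<lambda>s\<in>S. min (x s) (y s)) = min (papp A g hs x) (papp A g hs y)"
    proof -
      have mA: "(\<lambda>s\<in>S. min (x s) (y s)) \<in> A" using cxy by (elim conjE)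
      have "papp A g hs (\<lambda>s\<in>S. min (x s) (y s)) = g (map (\<lambda>h. h (\<lambda>s\<in>S. min (x s) (y s))) hs)"
        by (rule Pa[OF mA])
      also have "\<dots> = g (map (\<lambda>h. min (h x) (h y)) hs)" unfolding e1 ..
      also have "\<dots> = g (map2 min (map (\<lambda>h. h x) hs) (map (\<lambda>h. h y) hs))"
        by (rule arg_cong[where f=g], induction hs) auto
      also have "\<dots> = min (g (map (\<lambda>h. h x) hs)) (g (map (\<lambda>h. h y) hs))"
        by (rule op_props(4)[OF ae kg tup[OF x] tup[OF y]])
      also have "\<dots> = min (papp A g hs x) (papp A g hs y)" unfolding Pa[OF x] Pa[OF y] ..
      finally show ?thesis .
    qed
    have r2: "papp A g hs (\<lambda>s\<in>S. max (x s) (y s)) = max (papp A g hs x) (papp A g hs y)"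
    proof -
      have mA: "(\<lambda>s\<in>S. max (x s) (y s)) \<in> A" using cxy by (elim conjE)
      have "papp A g hs (\<lambda>s\<in>S. max (x s) (y s)) = g (map (\<lambda>h. h (\<lambda>s\<in>S. max (x s) (y s))) hs)"
        by (rule Pa[OF mA])
      also have "\<dots> = g (map (\<lambda>h. max (h x) (h y)) hs)" unfolding e2 ..
      also have "\<dots> = g (map2 max (map (\<lambda>h. h x) hs) (map (\<lambda>h. h y) hs))"
        by (rule arg_cong[where f=g], induction hs) auto
      also have "\<dots> = max (g (map (\<lambda>h. h x) hs)) (g (map (\<lambda>h. h y) hs))"
        by (rule op_props(5)[OF ae kg tup[OF x] tup[OF y]])
      also have "\<dots> = max (papp A g hs x) (papp A g hs y)" unfolding Pa[OF x] Pa[OF y] ..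
      finally show ?thesis .
    qed
    have r3: "papp A g hs (\<lambda>s\<in>S. himp n (x s) (y s)) = himp n (papp A g hs x) (papp A g hs y)"
    proof -
      have mA: "(\<lambda>s\<in>S. himp n (x s) (y s)) \<in> A" using cxy by (elim conjE)
      have "papp A g hs (\<lambda>s\<in>S. himp n (x s) (y s)) = g (map (\<lambda>h. h (\<lambda>s\<in>S. himp n (x s) (y s))) hs)"
        by (rule Pa[OF mA])
      also have "\<dots> = g (map (\<lambda>h. himp n (h x) (h y)) hs)" unfolding e3 ..
      also have "\<dots> = g (map2 (himp n) (map (\<lambda>h. h x) hs) (map (\<lambda>h. h y) hs))"
        by (rule arg_cong[where f=g], induction hs) auto
      also have "\<dots> = himp n (g (map (\<lambda>h. h x) hs)) (g (map (\<lambda>h. h y) hs))"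
        by (rule op_props(6)[OF ae kg tup[OF x] tup[OF y]])
      also have "\<dots> = himp n (papp A g hs x) (papp A g hs y)" unfolding Pa[OF x] Pa[OF y] ..
      finally show ?thesis .
    qed
    show ?thesis using r1 r2 r3 by (intro conjI)
  qed
  show ?thesis
    unfolding Dfun_def hom_to_C_def
    using inPi P0 Pt Pop by (auto simp: PiE_def)
qed

lemma subalg_B:
  assumes n: "4 \<le> n"
  shows "subalg n {t} (pt t ` {0, 2, n - 1})"
proof -
  let ?V = "{0, 2, n - 1} :: nat set"
  have sub: "pt t ` ?V \<subseteq> PiE {t} (\<lambda>_. {..<n})"
    using n by (intro image_subsetI) auto
  have cl: "(\<lambda>s\<in>{t}. min (x s) (y s)) \<in> pt t ` ?V \<and> (\<lambda>s\<in>{t}. max (x s) (y s)) \<in> pt t ` ?V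
      \<and> (\<lambda>s\<in>{t}. himp n (x s) (y s)) \<in> pt t ` ?V"
    if xin: "x \<in> pt t ` ?V" and yin: "y \<in> pt t ` ?V" for x y
  proof -
    obtain v where v2: "x = pt t v" and v1: "v \<in> ?V" using xin by blast
    obtain w where w2: "y = pt t w" and w1: "w \<in> ?V" using yin by blast
    have c1n: "(1::nat) < n" using n by simp
    note F = fc_hom[OF n order_refl c1n v1 w1]
    show ?thesis unfolding restr1 v2 w2 pt_at using F(1-3) by (intro conjI imageI)
  qed
  have c0: "(\<lambda>s\<in>{t}. 0) \<in> pt t ` ?V" unfolding restr1 by (intro imageI) simp
  have c1: "(\<lambda>s\<in>{t}. n - 1) \<in> pt t ` ?V" unfolding restr1 by (intro imageI) simp
  have cl': "\<forall>x\<in>pt t ` ?V. \<forall>y\<in>pt t ` ?V. (\<lambda>s\<in>{t}. min (x s) (y s)) \<in> pt t ` ?V \<and> (\<lambda>s\<in>{t}. max (x s) (y s)) \<in> pt t ` ?V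
      \<and> (\<lambda>s\<in>{t}. himp n (x s) (y s)) \<in> pt t ` ?V"
    by (intro ballI) (rule cl)
  show ?thesis
    unfolding subalg_def by (intro conjI sub c0 c1 cl')
qed

definition hc :: "nat \<Rightarrow> 'i \<Rightarrow> nat \<Rightarrow> ('i \<Rightarrow> nat) \<Rightarrow> nat" where
  "hc n t c = (\<lambda>b\<in>pt t ` {0, 2, n - 1}. fc n c (b t))"

lemma hc_in:
  assumes n: "4 \<le> n" and c: "1 \<le> c" "c < n"
  shows "hc n t c \<in> Dfun n {t} (pt t ` {0, 2, n - 1})"
proof -
  let ?V = "{0, 2, n - 1} :: nat set"
  have hv: "hc n t c (pt t v) = fc n c v" if "v \<in> ?V" for v
    using that unfolding hc_def by simp
  have pi: "hc n t c \<in> PiE (pt t ` ?V) (\<lambda>_. {..<n})"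
    unfolding hc_def using fc_lt[OF c(2)] by auto
  have ops: "hc n t c (\<lambda>s\<in>{t}. min (x s) (y s)) = min (hc n t c x) (hc n t c y) \<and>
        hc n t c (\<lambda>s\<in>{t}. max (x s) (y s)) = max (hc n t c x) (hc n t c y) \<and>
        hc n t c (\<lambda>s\<in>{t}. himp n (x s) (y s)) = himp n (hc n t c x) (hc n t c y)"
    if xin: "x \<in> pt t ` ?V" and yin: "y \<in> pt t ` ?V" for x y
  proof -
    obtain v where v: "v \<in> ?V" "x = pt t v" using xin by blast
    obtain w where w: "w \<in> ?V" "y = pt t w" using yin by blast
    note F = fc_hom[OF n c v(1) w(1)]
    show ?thesis unfolding restr1 v(2) w(2) pt_at
      using hv[OF F(1)] hv[OF F(2)] hv[OF F(3)] hv[OF v(1)] hv[OF w(1)] F(4,5,6) by simp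
  qed
  have h0: "hc n t c (\<lambda>s\<in>{t}. 0) = 0" unfolding restr1 using hv[of 0] by (simp add: fc_def)
  have nn: "n - 1 \<noteq> 2" "n - 1 \<noteq> 0" using n by auto
  have ht: "hc n t c (\<lambda>s\<in>{t}. n - 1) = n - 1" unfolding restr1 using hv[of "n - 1"] nn by (simp add: fc_def)
  have pi': "hc n t c \<in> pt t ` ?V \<rightarrow> {..<n}" using pi unfolding PiE_iff Pi_def by blast
  have ops': "\<forall>x\<in>pt t ` ?V. \<forall>y\<in>pt t ` ?V.
        hc n t c (\<lambda>s\<in>{t}. min (x s) (y s)) = min (hc n t c x) (hc n t c y) \<and>
        hc n t c (\<lambda>s\<in>{t}. max (x s) (y s)) = max (hc n t c x) (hc n t c y) \<and>
        hc n t c (\<lambda>s\<in>{t}. himp n (x s) (y s)) = himp n (hc n t c x) (hc n t c y)"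
    by (intro ballI) (rule ops)
  have "hom_to_C n {t} (pt t ` ?V) (hc n t c)"
    unfolding hom_to_C_def by (intro conjI pi' h0 ht ops')
  then show ?thesis
    unfolding Dfun_def using pi by (intro CollectI conjI)
qed

lemma dfun_pos:
  assumes n: "4 \<le> n" and h: "h \<in> Dfun n {t} (pt t ` {0, 2, n - 1})"
  shows "h (pt t 2) \<in> {1..<n}"
proof -
  let ?B = "pt t ` {0, 2, n - 1}"
  have hom: "hom_to_C n {t} ?B h" using h by (simp add: Dfun_def)
  have p2: "pt t 2 \<in> ?B" and p0: "pt t 0 \<in> ?B" by auto
  have pi: "h \<in> ?B \<rightarrow> {..<n}" using hom unfolding hom_to_C_def by (elim conjE)
  have z: "h (\<lambda>s\<in>{t}. 0) = 0" using hom unfolding hom_to_C_def by (elim conjE)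
  have hop: "\<forall>x\<in>?B. \<forall>y\<in>?B.
        h (\<lambda>s\<in>{t}. min (x s) (y s)) = min (h x) (h y) \<and>
        h (\<lambda>s\<in>{t}. max (x s) (y s)) = max (h x) (h y) \<and>
        h (\<lambda>s\<in>{t}. himp n (x s) (y s)) = himp n (h x) (h y)"
    using hom unfolding hom_to_C_def by (elim conjE)
  have z': "h (pt t 0) = 0" using z unfolding restr1 .
  have "h (\<lambda>s\<in>{t}. himp n (pt t 2 s) (pt t 0 s)) = himp n (h (pt t 2)) (h (pt t 0))"
    using bspec[OF bspec[OF hop p2] p0] by (elim conjE)
  then have "h (pt t (himp n 2 0)) = himp n (h (pt t 2)) 0" unfolding restr1 pt_at z' .
  moreover have e0: "himp n 2 0 = 0" by (simp add: himp_def)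
  ultimately have "h (pt t 0) = himp n (h (pt t 2)) 0" by simp
  then have e: "himp n (h (pt t 2)) 0 = 0" using z' by linarith
  have "h (pt t 2) \<noteq> 0"
  proof
    assume a: "h (pt t 2) = 0"
    have "himp n (h (pt t 2)) 0 = n - 1" unfolding a by (simp add: himp_def)
    with e n show False by linarith
  qed
  moreover have "h (pt t 2) < n" using pi p2 by auto
  ultimately show ?thesis by simp
qed

lemma beta_pattern:
  assumes ae: "alter_ego n G R" and n: "4 \<le> n"
    and dual: "alg_iso n {t} (pt t ` {0, 2, n - 1}) (Dfun n {t} (pt t ` {0, 2, n - 1}))
        (Efun n G R (pt t ` {0, 2, n - 1}) (Dfun n {t} (pt t ` {0, 2, n - 1}))) (evalA n {t} (pt t ` {0, 2, n - 1}))"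
    and beta: "\<beta> \<in> Efun n G R {t} (pt t ` {1..<n})"
  shows "\<exists>v\<in>{0, 2, n - 1}. \<forall>c\<in>{1..<n}. \<beta> (pt t c) = fc n c v"
proof -
  let ?B = "pt t ` {0, 2, n - 1}"
  let ?Y = "pt t ` {1..<n}"
  let ?XB = "Dfun n {t} ?B"
  define \<psi> where "\<psi> = (\<lambda>h. pt t (h (pt t 2)))"
  define \<gamma> where "\<gamma> = (\<lambda>h\<in>?XB. \<beta> (\<psi> h))"
  have bpi: "\<beta> \<in> PiE ?Y (\<lambda>_. {..<n})" using beta unfolding Efun_def mem_Collect_eq by (elim conjE)
  have bmor: "mor_to_C n G R {t} ?Y \<beta>" using beta unfolding Efun_def mem_Collect_eq by (elim conjE)
  have bG: "\<forall>(k, g)\<in>G. \<forall>xs. length xs = k \<and> set xs \<subseteq> ?Y \<longrightarrow> \<beta> (papp {t} g xs) = g (map \<beta> xs)"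
    using bmor unfolding mor_to_C_def by (elim conjE)
  have bR: "\<forall>(k, r)\<in>R. \<forall>xs. length xs = k \<and> set xs \<subseteq> ?Y \<and> rel_holds {t} r xs \<longrightarrow> map \<beta> xs \<in> r"
    using bmor unfolding mor_to_C_def by (elim conjE)
  have bG': "\<beta> (papp {t} g xs) = g (map \<beta> xs)" if "(k, g) \<in> G" "length xs = k" "set xs \<subseteq> ?Y" for k g xs
    using bspec[OF bG that(1)] that(2,3) by simp
  have bR': "map \<beta> xs \<in> r" if "(k, r) \<in> R" "length xs = k" "set xs \<subseteq> ?Y" "rel_holds {t} r xs" for k r xs
    using bspec[OF bR that(1)] that(2,3,4) by simp
  have \<psi>Y: "\<psi> h \<in> ?Y" if "h \<in> ?XB" for h
    unfolding \<psi>_def using dfun_pos[OF n that] by (rule imageI)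
  have finB: "finite ?B" by simp
  have XBsub: "?XB \<subseteq> PiE ?B (\<lambda>_. {..<n})" unfolding Dfun_def by blast
  have "finite (PiE ?B (\<lambda>_. {..<n}))" by (rule finite_PiE[OF finB]) simp
  then have finXB: "finite ?XB" using XBsub by (rule finite_subset[rotated])
  have dXB: "subtopology (powtop n ?B) ?XB = discrete_topology ?XB" by (rule fin_disc[OF XBsub finXB])
  have bval: "\<beta> y < n" if "y \<in> ?Y" for y
  proof -
    have "\<beta> y \<in> {..<n}" using bpi that by (rule PiE_mem)
    then show ?thesis by simp
  qed
  have \<gamma>val: "\<gamma> h = \<beta> (\<psi> h)" if "h \<in> ?XB" for h using that unfolding \<gamma>_def by simp
  have \<gamma>pi: "\<gamma> \<in> PiE ?XB (\<lambda>_. {..<n})"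
    unfolding \<gamma>_def restrict_PiE_iff
  proof (intro ballI)
    fix h assume "h \<in> ?XB"
    then show "\<beta> (\<psi> h) \<in> {..<n}" using bval[OF \<psi>Y] by simp
  qed
  have \<gamma>Pi: "\<gamma> \<in> ?XB \<rightarrow> {..<n}" using \<gamma>pi unfolding PiE_iff Pi_def by blast
  have p2: "pt t 2 \<in> ?B" by (intro imageI) simp
  have H: "\<gamma> (papp ?B g hs) = g (map \<gamma> hs)"
    if kg: "(k, g) \<in> G" and len: "length hs = k" and hs: "set hs \<subseteq> ?XB" for k g hs
  proof -
    have P: "papp ?B g hs \<in> ?XB" by (rule dfun_closed[OF ae kg subalg_B[OF n] len hs])
    have e1: "\<psi> (papp ?B g hs) = pt t (g (map (\<lambda>h. h (pt t 2)) hs))"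
      unfolding \<psi>_def papp_def using p2 by simp
    have e2: "papp {t} g (map \<psi> hs) = pt t (g (map (\<lambda>h. h (pt t 2)) hs))"
      unfolding papp_pt \<psi>_def by (simp add: o_def)
    have ys: "set (map \<psi> hs) \<subseteq> ?Y" using \<psi>Y hs by auto
    have e3: "map \<beta> (map \<psi> hs) = map \<gamma> hs" using hs \<gamma>val by (auto simp: subset_iff)
    have "\<gamma> (papp ?B g hs) = \<beta> (\<psi> (papp ?B g hs))" by (rule \<gamma>val[OF P])
    also have "\<dots> = \<beta> (papp {t} g (map \<psi> hs))" unfolding e1 e2 ..
    also have "\<dots> = g (map \<beta> (map \<psi> hs))" using bG'[OF kg _ ys] len by simp
    also have "\<dots> = g (map \<gamma> hs)" unfolding e3 ..
    finally show ?thesis .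
  qed
  have H2: "map \<gamma> hs \<in> r"
    if kr: "(k, r) \<in> R" and len: "length hs = k" and hs: "set hs \<subseteq> ?XB" and rh: "rel_holds ?B r hs" for k r hs
  proof -
    have "map (\<lambda>x. x (pt t 2)) hs \<in> r" using rh p2 unfolding rel_holds_def by blast
    then have rh2: "rel_holds {t} r (map \<psi> hs)" unfolding rel_holds_def \<psi>_def by (simp add: o_def)
    have ys: "set (map \<psi> hs) \<subseteq> ?Y" using \<psi>Y hs by auto
    have e3: "map \<beta> (map \<psi> hs) = map \<gamma> hs" using hs \<gamma>val by (auto simp: subset_iff)
    have "map \<beta> (map \<psi> hs) \<in> r" using bR'[OF kr _ ys rh2] len by simp
    then show ?thesis unfolding e3 .
  qed
  have \<gamma>mor: "mor_to_C n G R ?B ?XB \<gamma>"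
    unfolding mor_to_C_def
  proof (intro conjI)
    show "\<gamma> \<in> ?XB \<rightarrow> {..<n}" by (rule \<gamma>Pi)
    show "continuous_map (subtopology (powtop n ?B) ?XB) (discrete_topology {..<n}) \<gamma>"
      unfolding dXB continuous_map_from_discrete_topology topspace_discrete_topology by (rule \<gamma>Pi)
    show "\<forall>(k, g)\<in>G. \<forall>xs. length xs = k \<and> set xs \<subseteq> ?XB \<longrightarrow> \<gamma> (papp ?B g xs) = g (map \<gamma> xs)"
      unfolding split_def
    proof (intro ballI allI impI)
      fix p xs assume "p \<in> G" "length xs = fst p \<and> set xs \<subseteq> ?XB"
      then show "\<gamma> (papp ?B (snd p) xs) = snd p (map \<gamma> xs)" using H[of "fst p" "snd p" xs] by simp
    qed
    show "\<forall>(k, r)\<in>R. \<forall>xs. length xs = k \<and> set xs \<subseteq> ?XB \<and> rel_holds ?B r xs \<longrightarrow> map \<gamma> xs \<in> r"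
      unfolding split_def
    proof (intro ballI allI impI)
      fix p xs assume "p \<in> R" "length xs = fst p \<and> set xs \<subseteq> ?XB \<and> rel_holds ?B (snd p) xs"
      then show "map \<gamma> xs \<in> snd p" using H2[of "fst p" "snd p" xs] by simp
    qed
  qed
  have \<gamma>E: "\<gamma> \<in> Efun n G R ?B ?XB" unfolding Efun_def by (intro CollectI conjI \<gamma>pi \<gamma>mor)
  have bij: "bij_betw (evalA n {t} ?B) ?B (Efun n G R ?B ?XB)" using dual unfolding alg_iso_def by (elim conjE)
  then have "\<gamma> \<in> evalA n {t} ?B ` ?B" using \<gamma>E by (simp add: bij_betw_def)
  then obtain b where bB: "b \<in> ?B" and gb: "\<gamma> = evalA n {t} ?B b" by blast
  from bB obtain v where vV: "v \<in> {0, 2, n - 1}" and bv: "b = pt t v" by blast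
  show ?thesis
  proof (intro bexI[OF _ vV] ballI)
    fix c assume c: "c \<in> {1..<n}"
    have c': "1 \<le> c" "c < n" using c by auto
    have hcin: "hc n t c \<in> ?XB" by (rule hc_in[OF n c'(1) c'(2)])
    have hc2: "hc n t c (pt t 2) = c" unfolding hc_def using p2 by (simp add: fc_def)
    have "\<psi> (hc n t c) = pt t c" unfolding \<psi>_def hc2 ..
    then have "\<beta> (pt t c) = \<gamma> (hc n t c)" using \<gamma>val[OF hcin] by simp
    also have "\<dots> = hc n t c b" unfolding gb evalA_def using hcin by simp
    also have "\<dots> = fc n c v" unfolding bv hc_def using vV by simp
    finally show "\<beta> (pt t c) = fc n c v" .
  qed
qed

definition ev :: "nat \<Rightarrow> 'i \<Rightarrow> nat \<Rightarrow> ('i \<Rightarrow> nat) \<Rightarrow> nat" where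
  "ev n t v = (\<lambda>z\<in>pt t ` {2..<n}. fc n (z t) v)"

lemma inZ:
  assumes ae: "alter_ego n G R" and n: "4 \<le> n"
  shows "in_X n G {t} (pt t ` {2..<n})"
  by (rule inX_pt[OF ae]) (use n key2[OF ae _ n] in auto)

lemma inY:
  assumes ae: "alter_ego n G R" and n: "4 \<le> n"
  shows "in_X n G {t} (pt t ` {1..<n})"
proof (rule inX_pt[OF ae])
  show "2 \<le> n" using n by simp
  fix k g cs assume "(k, g) \<in> G" "cs \<in> tuples n k" "\<forall>c\<in>set cs. 1 \<le> c"
  then show "1 \<le> g cs" using key1[OF ae _ _] n by simp
qed

lemma fc_rep:
  assumes "set cs \<subseteq> {2..<n}" "4 \<le> n" "v \<in> {0, 2, n - 1}"
  shows "map (\<lambda>c. fc n c v) cs = (if v = 2 then cs else replicate (length cs) v)"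
  using assms by (induction cs) (auto simp: fc_def)

lemma ev_in:
  assumes ae: "alter_ego n G R" and n: "4 \<le> n" and v: "v \<in> {0, 2, n - 1}"
  shows "ev n t v \<in> Efun n G R {t} (pt t ` {2..<n})"
proof -
  let ?Z = "pt t ` {2..<n}"
  have Zin: "in_X n G {t} ?Z" by (rule inZ[OF ae n])
  have Zsub: "?Z \<subseteq> PiE {t} (\<lambda>_. {..<n})" using Zin unfolding in_X_def by (elim conjE)
  have clZ0: "\<forall>(k, g)\<in>G. \<forall>xs. length xs = k \<and> set xs \<subseteq> ?Z \<longrightarrow> papp {t} g xs \<in> ?Z"
    using Zin unfolding in_X_def by (elim conjE)
  have dZ: "subtopology (powtop n {t}) ?Z = discrete_topology ?Z" by (rule fin_disc[OF Zsub]) simp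
  have vals: "ev n t v z < n" if "z \<in> ?Z" for z
    using that fc_lt[of "z t" n v] unfolding ev_def by auto
  have pi: "ev n t v \<in> PiE ?Z (\<lambda>_. {..<n})"
    unfolding ev_def restrict_PiE_iff
  proof (intro ballI)
    fix z assume "z \<in> ?Z"
    then show "fc n (z t) v \<in> {..<n}" using fc_lt[of "z t" n v] by auto
  qed
  have Pi: "ev n t v \<in> ?Z \<rightarrow> {..<n}" using pi unfolding PiE_iff Pi_def by blast
  have mapev: "map (ev n t v) xs = map (\<lambda>c. fc n c v) (map (\<lambda>x. x t) xs)" if "set xs \<subseteq> ?Z" for xs
    using that unfolding ev_def by (auto simp: subset_iff)
  have cs2: "set (map (\<lambda>x. x t) xs) \<subseteq> {2..<n}" if "set xs \<subseteq> ?Z" for xs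
    by (rule map_pt_t[OF that])
  have H: "ev n t v (papp {t} g xs) = g (map (ev n t v) xs)"
    if kg: "(k, g) \<in> G" and len: "length xs = k" and xs: "set xs \<subseteq> ?Z" for k g xs
  proof -
    have P: "papp {t} g xs \<in> ?Z" using bspec[OF clZ0 kg] len xs by simp
    have l: "ev n t v (papp {t} g xs) = fc n (g (map (\<lambda>x. x t) xs)) v"
      using P unfolding ev_def by (simp add: papp_pt)
    have r: "map (ev n t v) xs = (if v = 2 then map (\<lambda>x. x t) xs else replicate k v)"
      unfolding mapev[OF xs] fc_rep[OF cs2[OF xs] n v] using len by simp
    show ?thesis
    proof (cases "v = 2")
      case True
      then show ?thesis unfolding l r by (simp add: fc_def)
    next
      case False
      then have "v = 0 \<or> v = n - 1" using v by auto
      then show ?thesis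
      proof
        assume v0: "v = 0"
        then show ?thesis unfolding l r using op_props(2)[OF ae kg] by (simp add: fc_def)
      next
        assume v1: "v = n - 1"
        have "n - 1 \<noteq> 0" "n - 1 \<noteq> 2" using n by auto
        then show ?thesis unfolding l r using v1 op_props(3)[OF ae kg] by (simp add: fc_def)
      qed
    qed
  qed
  have H2: "map (ev n t v) xs \<in> r"
    if kr: "(k, r) \<in> R" and len: "length xs = k" and xs: "set xs \<subseteq> ?Z" and rh: "rel_holds {t} r xs" for k r xs
  proof -
    have ar: "alg_rel n k r" using ae kr unfolding alter_ego_def by auto
    have cs: "map (\<lambda>x. x t) xs \<in> r" using rh unfolding rel_holds_def by simp
    have r0: "replicate k 0 \<in> r" and r1: "replicate k (n - 1) \<in> r" using ar unfolding alg_rel_def by auto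
    have r: "map (ev n t v) xs = (if v = 2 then map (\<lambda>x. x t) xs else replicate k v)"
      unfolding mapev[OF xs] fc_rep[OF cs2[OF xs] n v] using len by simp
    show ?thesis unfolding r using cs r0 r1 v by auto
  qed
  have mor: "mor_to_C n G R {t} ?Z (ev n t v)"
    unfolding mor_to_C_def
  proof (intro conjI)
    show "ev n t v \<in> ?Z \<rightarrow> {..<n}" by (rule Pi)
    show "continuous_map (subtopology (powtop n {t}) ?Z) (discrete_topology {..<n}) (ev n t v)"
      unfolding dZ continuous_map_from_discrete_topology topspace_discrete_topology by (rule Pi)
    show "\<forall>(k, g)\<in>G. \<forall>xs. length xs = k \<and> set xs \<subseteq> ?Z \<longrightarrow> ev n t v (papp {t} g xs) = g (map (ev n t v) xs)"
      unfolding split_def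
    proof (intro ballI allI impI)
      fix p xs assume "p \<in> G" "length xs = fst p \<and> set xs \<subseteq> ?Z"
      then show "ev n t v (papp {t} (snd p) xs) = snd p (map (ev n t v) xs)" using H[of "fst p" "snd p" xs] by simp
    qed
    show "\<forall>(k, r)\<in>R. \<forall>xs. length xs = k \<and> set xs \<subseteq> ?Z \<and> rel_holds {t} r xs \<longrightarrow> map (ev n t v) xs \<in> r"
      unfolding split_def
    proof (intro ballI allI impI)
      fix p xs assume "p \<in> R" "length xs = fst p \<and> set xs \<subseteq> ?Z \<and> rel_holds {t} (snd p) xs"
      then show "map (ev n t v) xs \<in> snd p" using H2[of "fst p" "snd p" xs] by simp
    qed
  qed
  show ?thesis unfolding Efun_def by (intro CollectI conjI pi mor)
qed

lemma ev_at2: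
  assumes n: "4 \<le> n" and u: "u \<in> {0, 2, n - 1}"
  shows "ev n t u (pt t 2) = u"
proof -
  have "pt t 2 \<in> pt t ` {2..<n}" using n by (intro imageI) simp
  then show ?thesis unfolding ev_def using u by (auto simp: fc_def)
qed

lemma ev_op:
  assumes n: "4 \<le> n" and v: "v \<in> {0, 2, n - 1}" and w: "w \<in> {0, 2, n - 1}"
  shows "(\<lambda>s\<in>pt t ` {2..<n}. min (ev n t v s) (ev n t w s)) = ev n t (min v w)"
    "(\<lambda>s\<in>pt t ` {2..<n}. max (ev n t v s) (ev n t w s)) = ev n t (max v w)"
    "(\<lambda>s\<in>pt t ` {2..<n}. himp n (ev n t v s) (ev n t w s)) = ev n t (himp n v w)"
proof -
  have F: "fc n (z t) (min v w) = min (fc n (z t) v) (fc n (z t) w) \<and>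
      fc n (z t) (max v w) = max (fc n (z t) v) (fc n (z t) w) \<and>
      fc n (z t) (himp n v w) = himp n (fc n (z t) v) (fc n (z t) w)" if z: "z \<in> pt t ` {2..<n}" for z
  proof -
    obtain c where c: "c \<in> {2..<n}" "z = pt t c" using z by blast
    have c1: "1 \<le> c" "c < n" using c(1) by auto
    note FF = fc_hom[OF n c1 v w]
    show ?thesis unfolding c(2) pt_at using FF(4,5,6) by (intro conjI)
  qed
  show "(\<lambda>s\<in>pt t ` {2..<n}. min (ev n t v s) (ev n t w s)) = ev n t (min v w)"
    unfolding ev_def by (rule restrict_ext) (use F in simp)
  show "(\<lambda>s\<in>pt t ` {2..<n}. max (ev n t v s) (ev n t w s)) = ev n t (max v w)"
    unfolding ev_def by (rule restrict_ext) (use F in simp)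
  show "(\<lambda>s\<in>pt t ` {2..<n}. himp n (ev n t v s) (ev n t w s)) = ev n t (himp n v w)"
    unfolding ev_def by (rule restrict_ext) (use F in simp)
qed

theorem corollary6p2:
  fixes n :: nat and G :: "(nat \<times> (nat list \<Rightarrow> nat)) set" and R :: "(nat \<times> nat list set) set"
  assumes "4 \<le> n" and "infinite (UNIV :: 'i set)" and "alter_ego n G R"
  shows "\<not> strong_duality TYPE('i) n G R"
proof
  assume sd: "strong_duality TYPE('i) n G R"
  have n: "4 \<le> n" and ae: "alter_ego n G R" using assms by auto
  define t where "t = (undefined :: 'i)"
  let ?V = "{0, 2, n - 1} :: nat set"
  let ?B = "pt t ` ?V"
  let ?Y = "pt t ` {1..<n}"
  let ?Z = "pt t ` {2..<n}"
  let ?EZ = "Efun n G R {t} ?Z"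
  have D1: "\<forall>(S::'i set) A. subalg n S A \<longrightarrow>
        alg_iso n S A (Dfun n S A) (Efun n G R A (Dfun n S A)) (evalA n S A)"
    using sd unfolding strong_duality_def by (elim conjE)
  have D2: "\<forall>(S::'i set) X. in_X n G S X \<longrightarrow>
        str_iso n G R S X (Efun n G R S X) (Dfun n X (Efun n G R S X)) (evalX n G R S X)"
    using sd unfolding strong_duality_def by (elim conjE)
  have D3: "\<forall>(S::'i set) X (T::'i set) Y \<phi>. in_X n G S X \<and> in_X n G T Y \<and> str_emb n G R S X T Y \<phi> \<longrightarrow>
        (\<forall>\<alpha>\<in>Efun n G R S X. \<exists>\<beta>\<in>Efun n G R T Y. \<forall>x\<in>X. \<beta> (\<phi> x) = \<alpha> x)"
    using sd unfolding strong_duality_def by (elim conjE)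
  have dual: "alg_iso n {t} ?B (Dfun n {t} ?B) (Efun n G R ?B (Dfun n {t} ?B)) (evalA n {t} ?B)"
    by (rule D1[rule_format, OF subalg_B[OF n]])
  have Yin: "in_X n G {t} ?Y" by (rule inY[OF ae n])
  have Zin: "in_X n G {t} ?Z" by (rule inZ[OF ae n])
  have ZY: "?Z \<subseteq> ?Y" by (rule image_mono) auto
  have emb: "str_emb n G R {t} ?Z {t} ?Y id" by (rule emb_id[OF Zin Yin ZY]) simp
  have c3: "in_X n G {t} ?Z \<and> in_X n G {t} ?Y \<and> str_emb n G R {t} ?Z {t} ?Y id"
    using Zin Yin emb by (intro conjI)
  have ext: "\<forall>\<alpha>\<in>?EZ. \<exists>\<beta>\<in>Efun n G R {t} ?Y. \<forall>x\<in>?Z. \<beta> (id x) = \<alpha> x"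
    using mp[OF spec[OF spec[OF spec[OF spec[OF spec[OF D3, of "{t}"], of ?Z], of "{t}"], of ?Y], of id] c3] .
  have EZsub: "?EZ \<subseteq> ev n t ` ?V"
  proof
    fix \<alpha> assume a: "\<alpha> \<in> ?EZ"
    obtain \<beta> where b: "\<beta> \<in> Efun n G R {t} ?Y" and ba: "\<forall>x\<in>?Z. \<beta> (id x) = \<alpha> x"
      using bspec[OF ext a] by blast
    obtain v where vV: "v \<in> ?V" and bv: "\<forall>c\<in>{1..<n}. \<beta> (pt t c) = fc n c v"
      using beta_pattern[OF ae n dual b] by blast
    have apiE: "\<alpha> \<in> PiE ?Z (\<lambda>_. {..<n})" using a unfolding Efun_def by blast
    have "\<alpha> = ev n t v"
    proof
      fix x show "\<alpha> x = ev n t v x"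
      proof (cases "x \<in> ?Z")
        case True
        then obtain c where c: "c \<in> {2..<n}" "x = pt t c" by blast
        have c1: "c \<in> {1..<n}" using c(1) by simp
        have xt: "x t = c" unfolding c(2) by simp
        have "\<alpha> x = \<beta> x" using bspec[OF ba True] by simp
        also have "\<dots> = fc n c v" unfolding c(2) by (rule bspec[OF bv c1])
        also have "\<dots> = fc n (x t) v" unfolding xt ..
        also have "\<dots> = ev n t v x" unfolding ev_def using True by simp
        finally show ?thesis .
      next
        case False
        have "\<alpha> x = undefined" using apiE False by (rule PiE_arb)
        moreover have "ev n t v x = undefined" unfolding ev_def using False by simp
        ultimately show ?thesis by simp
      qed
    qed
    then show "\<alpha> \<in> ev n t ` ?V" using vV by blast
  qed
  have EZsup: "ev n t ` ?V \<subseteq> ?EZ"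
  proof
    fix e assume "e \<in> ev n t ` ?V"
    then obtain v where "v \<in> ?V" "e = ev n t v" by blast
    then show "e \<in> ?EZ" using ev_in[OF ae n] by simp
  qed
  have EZ: "?EZ = ev n t ` ?V" using EZsub EZsup by (rule subset_antisym)
  have iso: "str_iso n G R {t} ?Z ?EZ (Dfun n ?Z ?EZ) (evalX n G R {t} ?Z)"
    using mp[OF spec[OF spec[OF D2, of "{t}"], of ?Z] Zin] .
  then have bij: "bij_betw (evalX n G R {t} ?Z) ?Z (Dfun n ?Z ?EZ)" unfolding str_iso_def by (elim conjE)
  define h1 where "h1 = (\<lambda>e\<in>ev n t ` ?V. fc n 1 (e (pt t 2)))"
  have h1ev: "h1 (ev n t u) = fc n 1 u" if u: "u \<in> ?V" for u
  proof -
    have "ev n t u \<in> ev n t ` ?V" using u by (rule imageI)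
    then have "h1 (ev n t u) = fc n 1 (ev n t u (pt t 2))" unfolding h1_def by (rule restrict_apply')
    then show ?thesis unfolding ev_at2[OF n u] .
  qed
  have n1: "(1::nat) < n" using n by simp
  have h1pi: "h1 \<in> PiE (ev n t ` ?V) (\<lambda>_. {..<n})"
    unfolding h1_def restrict_PiE_iff using fc_lt[OF n1] by simp
  have h1Pi: "h1 \<in> ev n t ` ?V \<rightarrow> {..<n}" using h1pi unfolding PiE_iff Pi_def by blast
  have z0: "(\<lambda>s\<in>?Z. 0) = ev n t 0" unfolding ev_def by (rule restrict_ext) (simp add: fc_def)
  have zt: "(\<lambda>s\<in>?Z. n - 1) = ev n t (n - 1)"
  proof -
    have "n - 1 \<noteq> 0" "n - 1 \<noteq> 2" using n by auto
    then show ?thesis unfolding ev_def by (intro restrict_ext) (simp add: fc_def)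
  qed
  have h10: "h1 (\<lambda>s\<in>?Z. 0) = 0" unfolding z0 using h1ev[of 0] by (simp add: fc_def)
  have h1t: "h1 (\<lambda>s\<in>?Z. n - 1) = n - 1"
  proof -
    have "n - 1 \<noteq> 0" "n - 1 \<noteq> 2" using n by auto
    then show ?thesis unfolding zt using h1ev[of "n - 1"] by (simp add: fc_def)
  qed
  have h1op: "h1 (\<lambda>s\<in>?Z. min (x s) (y s)) = min (h1 x) (h1 y) \<and>
        h1 (\<lambda>s\<in>?Z. max (x s) (y s)) = max (h1 x) (h1 y) \<and>
        h1 (\<lambda>s\<in>?Z. himp n (x s) (y s)) = himp n (h1 x) (h1 y)"
    if xin: "x \<in> ev n t ` ?V" and yin: "y \<in> ev n t ` ?V" for x y
  proof -
    obtain v where v: "v \<in> ?V" "x = ev n t v" using xin by blast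
    obtain w where w: "w \<in> ?V" "y = ev n t w" using yin by blast
    note O = ev_op[OF n v(1) w(1), of t]
    note F = fc_hom[OF n order_refl n1 v(1) w(1)]
    show ?thesis unfolding v(2) w(2) O h1ev[OF v(1)] h1ev[OF w(1)] h1ev[OF F(1)] h1ev[OF F(2)] h1ev[OF F(3)]
      using F(4,5,6) by (intro conjI)
  qed
  have h1op': "\<forall>x\<in>ev n t ` ?V. \<forall>y\<in>ev n t ` ?V.
        h1 (\<lambda>s\<in>?Z. min (x s) (y s)) = min (h1 x) (h1 y) \<and>
        h1 (\<lambda>s\<in>?Z. max (x s) (y s)) = max (h1 x) (h1 y) \<and>
        h1 (\<lambda>s\<in>?Z. himp n (x s) (y s)) = himp n (h1 x) (h1 y)"
    by (intro ballI) (rule h1op)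
  have "hom_to_C n ?Z (ev n t ` ?V) h1"
    unfolding hom_to_C_def by (intro conjI h1Pi h10 h1t h1op')
  then have h1D: "h1 \<in> Dfun n ?Z ?EZ" unfolding EZ Dfun_def using h1pi by (intro CollectI conjI)
  then have "h1 \<in> evalX n G R {t} ?Z ` ?Z" using bij by (simp add: bij_betw_def)
  then obtain z where zZ: "z \<in> ?Z" and hz: "h1 = evalX n G R {t} ?Z z" by blast
  obtain c where c: "c \<in> {2..<n}" "z = pt t c" using zZ by blast
  have V2: "(2::nat) \<in> ?V" by simp
  have e2: "ev n t 2 \<in> ?EZ" unfolding EZ using V2 by (rule imageI)
  have "h1 (ev n t 2) = 1" using h1ev[OF V2] by (simp add: fc_def)
  moreover have "evalX n G R {t} ?Z z (ev n t 2) = c"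
    unfolding evalX_def using e2 zZ c by (simp add: ev_def fc_def)
  ultimately show False using hz c by simp
qed

end
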